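(* Let $t\geq 4$ be an even integer, let $a,b,c\geq 1$ and $w\geq 0$ be integers, and let $L=\{1^a,2^b,t^c\}$. If there exists a $t^{4w}$-extendable linear realization $rL$ of $L$, then for every $x=0,\dots,w$ there exists a linear realization $rL'$ of $L'=\{1^a,2^b,t^{c+4x+4}\}$. Furthermore, if $rL$ is special of type $2$, then $rL'$ can be taken special of type $2$ as well.
   Context: $\{1^a,2^b,t^c\}$ is the multiset with $a$ copies of $1$, $b$ copies of $2$, $c$ copies of $t$. For a multiset $L$ of positive integers with $|L|=v-1$, each at most $v-1$, a linear realization of $L$ is a Hamiltonian path $[x_0,\dots,x_{v-1}]$ of the complete graph on $\{0,\dots,v-1\}$ such that the multiset $\{|x_i-x_{i+1}|\}$ equals $L$. It is special of type $2$ if its endpoints are $0$ and $1$. For $L=\{1^a,2^b,t^c\}$ set $v=|L|+1$, $e_1=[v-t,v-t+2]$, $e_2=[v-t,v-t+1]$; for an edge $e=[p,q]$ and an integer $m$, $e+m$ denotes $[p+m,q+m]$. A linear realization $rL$ is $t^{4w}$-extendable if there is $i\in\{1,2\}$ such that for every $x=0,\dots,w$ both $e_i+4x$ and $e_i+4x+i$ are edges of $rL$. *)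

theory Defs
  imports Main "HOL-Library.Multiset"
begin

definition L3 :: "nat \<Rightarrow> nat \<Rightarrow> nat \<Rightarrow> nat \<Rightarrow> nat multiset" where
  "L3 a b t c = replicate_mset a 1 + replicate_mset b 2 + replicate_mset c t"

text \<open>A Hamiltonian path [x_0,...,x_{v-1}] of K_v on {0,...,v-1}, as a list.\<close>
definition edge_lengths :: "nat list \<Rightarrow> nat multiset" where
  "edge_lengths xs = mset (map (\<lambda>i. nat \<bar>int (xs ! i) - int (xs ! Suc i)\<bar>) [0..<length xs - 1])"

definition linear_realization :: "nat multiset \<Rightarrow> nat list \<Rightarrow> bool" where
  "linear_realization L xs \<longleftrightarrow>
     length xs = size L + 1 \<and> distinct xs \<and> set xs = {0..<length xs} \<and>
     edge_lengths xs = L"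

definition special2 :: "nat list \<Rightarrow> bool" where
  "special2 xs \<longleftrightarrow> {hd xs, last xs} = {0, 1}"

text \<open>[p,q] is an edge of the path xs (unordered; vertices as integers so that
  out-of-range translates are simply not edges).\<close>
definition is_edge :: "nat list \<Rightarrow> int \<Rightarrow> int \<Rightarrow> bool" where
  "is_edge xs p q \<longleftrightarrow> (\<exists>i. Suc i < length xs \<and> {int (xs ! i), int (xs ! Suc i)} = {p, q})"

text \<open>e_1 = [v-t, v-t+2], e_2 = [v-t, v-t+1]: e_i = [v-t, v-t+(3-i)].\<close>
definition extendable :: "nat \<Rightarrow> nat \<Rightarrow> nat list \<Rightarrow> bool" where
  "extendable t w xs \<longleftrightarrow>
     (let v = int (length xs) in
      \<exists>i\<in>{1::int, 2}. \<forall>x\<in>{0..w}.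
        is_edge xs (v - int t + 4 * int x) (v - int t + (3 - i) + 4 * int x) \<and>
        is_edge xs (v - int t + 4 * int x + i) (v - int t + (3 - i) + 4 * int x + i))"

end

theory Submission
  imports Defs
begin

definition dd :: "nat \<Rightarrow> nat \<Rightarrow> nat" where "dd x y = nat \<bar>int x - int y\<bar>"

fun el :: "nat list \<Rightarrow> nat multiset" where
  "el (x#y#zs) = {#dd x y#} + el (y#zs)"
| "el _ = {#}"

lemma edge_lengths_Cons2: "edge_lengths (x#y#zs) = {#dd x y#} + edge_lengths (y#zs)"
proof -
  have "[0..<length (x#y#zs) - 1] = 0 # map Suc [0..<length zs]"
    by (simp add: upt_conv_Cons map_Suc_upt del: upt_Suc)
  moreover have "[0..<length (y#zs) - 1] = [0..<length zs]" by simp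
  ultimately show ?thesis unfolding edge_lengths_def dd_def
    by (simp add: comp_def)
qed

lemma edge_lengths_el: "edge_lengths xs = el xs"
proof (induction xs rule: el.induct)
  case (1 x y zs) then show ?case by (simp only: edge_lengths_Cons2 el.simps)
qed (simp_all add: edge_lengths_def)

lemma el_append: "xs \<noteq> [] \<Longrightarrow> ys \<noteq> [] \<Longrightarrow> el (xs @ ys) = el xs + el ys + {#dd (last xs) (hd ys)#}"
proof (induction xs rule: el.induct)
  case (1 x y zs) then show ?case by simp
qed (auto simp: neq_Nil_conv)

definition ins2 :: "nat \<Rightarrow> nat list \<Rightarrow> nat \<Rightarrow> nat list" where
  "ins2 t xs i = take (Suc i) xs @ [xs!i + t, xs!Suc i + t] @ drop (Suc i) xs"

lemma ins2_el: assumes "Suc i < length xs"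
  shows "edge_lengths (ins2 t xs i) = edge_lengths xs + {#t, t#}"
proof -
  let ?A = "take (Suc i) xs" and ?B = "drop (Suc i) xs"
  have A: "?A \<noteq> []" "last ?A = xs!i" using assms by (auto simp: take_Suc_conv_app_nth)
  have B: "?B \<noteq> []" "hd ?B = xs!Suc i" using assms by (auto simp: hd_drop_conv_nth)
  have "el xs = el (?A @ ?B)" by simp
  also have "\<dots> = el ?A + el ?B + {#dd (xs!i) (xs!Suc i)#}" using A B el_append[of ?A ?B] by (simp del: append_take_drop_id)
  finally have 1: "el xs = el ?A + el ?B + {#dd (xs!i) (xs!Suc i)#}" .
  have "el (ins2 t xs i) = el ?A + el ([xs!i + t, xs!Suc i + t] @ ?B) + {#dd (xs!i) (xs!i+t)#}"
    unfolding ins2_def using A B by (subst el_append) auto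
  also have "el ([xs!i + t, xs!Suc i + t] @ ?B) = {#dd (xs!i + t) (xs!Suc i + t)#} + el ?B + {#dd (xs!Suc i + t) (xs!Suc i)#}"
    using B by (subst el_append) auto
  finally show ?thesis using 1 by (simp add: edge_lengths_el dd_def)
qed

lemma ins2_nth: assumes "Suc i < length xs"
  shows "ins2 t xs i ! k = (if k \<le> i then xs!k else if k = Suc i then xs!i+t
          else if k = i+2 then xs!Suc i + t else xs!(k-2))"
proof -
  have "\<not> k \<le> i+2 \<Longrightarrow> Suc (k-3) = k-2" by arith
  then show ?thesis using assms unfolding ins2_def by (auto simp: nth_append min_def)
qed

lemma ins2_len: "Suc i < length xs \<Longrightarrow> length (ins2 t xs i) = length xs + 2"
  unfolding ins2_def by simp

lemma ins2_set: "Suc i < length xs \<Longrightarrow> set (ins2 t xs i) = set xs \<union> {xs!i + t, xs!Suc i + t}"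
proof -
  have "set xs = set (take (Suc i) xs) \<union> set (drop (Suc i) xs)"
    by (metis append_take_drop_id set_append)
  thus "Suc i < length xs \<Longrightarrow> ?thesis" unfolding ins2_def by auto
qed

lemma ins2_distinct: assumes "Suc i < length xs" "distinct xs"
  "xs!i + t \<notin> set xs" "xs!Suc i + t \<notin> set xs"
  shows "distinct (ins2 t xs i)"
proof -
  have ne: "xs!i \<noteq> xs!Suc i" using assms(1,2) by (simp add: nth_eq_iff_index_eq)
  have d: "distinct (take (Suc i) xs @ drop (Suc i) xs)" using assms(2) by simp
  have s: "set xs = set (take (Suc i) xs) \<union> set (drop (Suc i) xs)"
    by (metis append_take_drop_id set_append)
  show ?thesis unfolding ins2_def using d ne assms(3,4) s
    by (auto simp del: append_take_drop_id simp add: distinct_append)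
qed

lemma ins2_hd: "Suc i < length xs \<Longrightarrow> hd (ins2 t xs i) = hd xs"
  unfolding ins2_def by (cases xs) auto

lemma ins2_last: "Suc i < length xs \<Longrightarrow> last (ins2 t xs i) = last xs"
  unfolding ins2_def by simp

lemma ins2_edge: assumes "Suc i < length xs" "is_edge xs p q"
  "{int (xs!i), int (xs!Suc i)} \<noteq> {p, q}"
  shows "is_edge (ins2 t xs i) p q"
proof -
  obtain j where j: "Suc j < length xs" "{int (xs ! j), int (xs ! Suc j)} = {p, q}"
    using assms(2) unfolding is_edge_def by blast
  have "j \<noteq> i" using j assms(3) by auto
  show ?thesis
  proof (cases "j < i")
    case True
    then show ?thesis unfolding is_edge_def using j assms(1)
      by (intro exI[of _ j]) (auto simp: ins2_nth ins2_len)
  next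
    case False
    with \<open>j \<noteq> i\<close> have "j > i" by simp
    then show ?thesis unfolding is_edge_def using j assms(1)
      by (intro exI[of _ "j+2"]) (auto simp: ins2_nth ins2_len)
  qed
qed


lemma step:
  assumes lr: "linear_realization L xs" and dk: "(d=2 \<and> k=1) \<or> (d=1 \<and> k=(2::nat))"
  and e1: "is_edge xs (int (length xs) - int t) (int (length xs) - int t + int d)"
  and e2: "is_edge xs (int (length xs) - int t + int k) (int (length xs) - int t + int k + int d)"
  shows "\<exists>xs'. linear_realization (L + {#t,t,t,t#}) xs' \<and> length xs' = length xs + 4 \<and>
     hd xs' = hd xs \<and> last xs' = last xs \<and>
     (\<forall>p q. is_edge xs p q \<and> p \<ge> int (length xs) - int t + 4 \<and> q \<ge> int (length xs) - int t + 4
        \<longrightarrow> is_edge xs' p q)"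
proof -
  define n where "n = length xs"
  define U where "U = int n - int t"
  have len: "n = size L + 1" and dist: "distinct xs" and st: "set xs = {0..<n}"
    and el: "edge_lengths xs = L"
    using lr unfolding linear_realization_def n_def by auto
  obtain i where i: "Suc i < n" "{int (xs!i), int (xs!Suc i)} = {U, U + int d}"
    using e1 unfolding is_edge_def n_def U_def by blast
  have n1: "{xs!i + t, xs!Suc i + t} = {n, n+d}"
    using i(2) unfolding U_def by (auto simp: doubleton_eq_iff)
  define xs1 where "xs1 = ins2 t xs i"
  have len1: "length xs1 = n + 2" using i unfolding xs1_def n_def by (simp add: ins2_len)
  have st1: "set xs1 = {0..<n} \<union> {n, n+d}" using i st n1 unfolding xs1_def n_def
    by (simp add: ins2_set)
  have dist1: "distinct xs1" unfolding xs1_def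
    using i n1 st dist by (intro ins2_distinct) (auto simp: n_def doubleton_eq_iff)
  have el1: "edge_lengths xs1 = L + {#t,t#}" using i el unfolding xs1_def n_def by (simp add: ins2_el)
  have hd1: "hd xs1 = hd xs" and last1: "last xs1 = last xs"
    using i unfolding xs1_def n_def by (auto simp: ins2_hd ins2_last)
  have e2': "is_edge xs1 (U + int k) (U + int k + int d)"
    unfolding xs1_def using i e2 dk unfolding n_def U_def
    by (intro ins2_edge) (auto simp: doubleton_eq_iff)
  obtain j where j: "Suc j < n + 2" "{int (xs1!j), int (xs1!Suc j)} = {U + int k, U + int k + int d}"
    using e2' len1 unfolding is_edge_def by auto
  have n2: "{xs1!j + t, xs1!Suc j + t} = {n + k, n+k+d}"
    using j(2) unfolding U_def by (auto simp: doubleton_eq_iff)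
  define xs2 where "xs2 = ins2 t xs1 j"
  have len2: "length xs2 = n + 4" using j len1 unfolding xs2_def by (simp add: ins2_len)
  have st2: "set xs2 = {0..<n+4}" using j st1 n2 len1 dk unfolding xs2_def
    by (auto simp: ins2_set)
  have dist2: "distinct xs2" unfolding xs2_def
    using j n2 st1 dist1 len1 dk by (intro ins2_distinct) (auto simp: doubleton_eq_iff)
  have el2: "edge_lengths xs2 = L + {#t,t,t,t#}" using j el1 len1 unfolding xs2_def by (simp add: ins2_el)
  have hd2: "hd xs2 = hd xs" and last2: "last xs2 = last xs"
    using j len1 hd1 last1 unfolding xs2_def by (auto simp: ins2_hd ins2_last)
  have edges: "is_edge xs2 p q" if "is_edge xs p q" "p \<ge> U + 4" "q \<ge> U + 4" for p q
  proof -
    have "is_edge xs1 p q" unfolding xs1_def using i that unfolding n_def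
      by (intro ins2_edge) (auto simp: doubleton_eq_iff)
    then show ?thesis unfolding xs2_def using j that len1 dk
      by (intro ins2_edge) (auto simp: doubleton_eq_iff)
  qed
  show ?thesis
    apply (rule exI[of _ xs2])
    using len2 st2 dist2 el2 hd2 last2 edges len unfolding linear_realization_def n_def U_def
    by auto
qed


lemma L3_add4: "L3 a b t c + {#t,t,t,t#} = L3 a b t (c + 4)"
  unfolding L3_def by (simp add: numeral_eq_Suc)

lemma main_ind:
  assumes dk: "(d=2 \<and> k=1) \<or> (d=1 \<and> k=(2::nat))"
  shows "\<forall>c xs. linear_realization (L3 a b t c) xs \<and>
    (\<forall>y\<le>x. is_edge xs (int (length xs) - int t + 4 * int y) (int (length xs) - int t + 4 * int y + int d) \<and>
       is_edge xs (int (length xs) - int t + 4 * int y + int k) (int (length xs) - int t + 4 * int y + int k + int d))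
    \<longrightarrow> (\<exists>xs'. linear_realization (L3 a b t (c + 4 * x + 4)) xs' \<and> hd xs' = hd xs \<and> last xs' = last xs)"
proof (induction x)
  case 0
  show ?case
  proof (intro allI impI, elim conjE)
    fix c xs
    assume lr: "linear_realization (L3 a b t c) xs" and E: "\<forall>y\<le>0. is_edge xs (int (length xs) - int t + 4 * int y) (int (length xs) - int t + 4 * int y + int d) \<and>
       is_edge xs (int (length xs) - int t + 4 * int y + int k) (int (length xs) - int t + 4 * int y + int k + int d)"
    from E have "is_edge xs (int (length xs) - int t) (int (length xs) - int t + int d)"
      "is_edge xs (int (length xs) - int t + int k) (int (length xs) - int t + int k + int d)"
      by auto
    from step[OF lr dk this, unfolded L3_add4] show "\<exists>xs'. linear_realization (L3 a b t (c + 4 * 0 + 4)) xs' \<and> hd xs' = hd xs \<and> last xs' = last xs"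
      by auto
  qed
next
  case (Suc x)
  show ?case
  proof (intro allI impI, elim conjE)
    fix c xs
    assume lr: "linear_realization (L3 a b t c) xs" and E: "\<forall>y\<le>Suc x. is_edge xs (int (length xs) - int t + 4 * int y) (int (length xs) - int t + 4 * int y + int d) \<and>
       is_edge xs (int (length xs) - int t + 4 * int y + int k) (int (length xs) - int t + 4 * int y + int k + int d)"
    from E have "is_edge xs (int (length xs) - int t) (int (length xs) - int t + int d)"
      "is_edge xs (int (length xs) - int t + int k) (int (length xs) - int t + int k + int d)"
      by auto
    from step[OF lr dk this, unfolded L3_add4] obtain xs1 where x1: "linear_realization (L3 a b t (c+4)) xs1"
      "length xs1 = length xs + 4" "hd xs1 = hd xs" "last xs1 = last xs"
      "\<And>p q. is_edge xs p q \<Longrightarrow> p \<ge> int (length xs) - int t + 4 \<Longrightarrow> q \<ge> int (length xs) - int t + 4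
        \<Longrightarrow> is_edge xs1 p q"
      by blast
    have E1: "\<forall>y\<le>x. is_edge xs1 (int (length xs1) - int t + 4 * int y) (int (length xs1) - int t + 4 * int y + int d) \<and>
       is_edge xs1 (int (length xs1) - int t + 4 * int y + int k) (int (length xs1) - int t + 4 * int y + int k + int d)"
    proof (intro allI impI)
      fix y assume "y \<le> x"
      then have "Suc y \<le> Suc x" by simp
      with E have A: "is_edge xs (int (length xs) - int t + 4 * int (Suc y)) (int (length xs) - int t + 4 * int (Suc y) + int d) \<and>
       is_edge xs (int (length xs) - int t + 4 * int (Suc y) + int k) (int (length xs) - int t + 4 * int (Suc y) + int k + int d)"
        by blast
      have eq: "int (length xs) - int t + 4 * int (Suc y) = int (length xs1) - int t + 4 * int y"
        using x1(2) by simp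
      show "is_edge xs1 (int (length xs1) - int t + 4 * int y) (int (length xs1) - int t + 4 * int y + int d) \<and>
       is_edge xs1 (int (length xs1) - int t + 4 * int y + int k) (int (length xs1) - int t + 4 * int y + int k + int d)"
        using A unfolding eq using x1(5) x1(2) by auto
    qed
    from Suc.IH[THEN spec[of _ "c+4"], THEN spec[of _ xs1]] x1 E1 obtain xs' where
      "linear_realization (L3 a b t (c + 4 + 4 * x + 4)) xs'" "hd xs' = hd xs1" "last xs' = last xs1"
      by blast
    then show "\<exists>xs'. linear_realization (L3 a b t (c + 4 * Suc x + 4)) xs' \<and> hd xs' = hd xs \<and> last xs' = last xs"
      using x1 by (auto simp: algebra_simps)
  qed
qed

theorem lemma3p6:
  fixes t a b c w :: nat and rL :: "nat list"
  assumes "even t" and "t \<ge> 4" and "a \<ge> 1" and "b \<ge> 1" and "c \<ge> 1"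
    and "linear_realization (L3 a b t c) rL"
    and "extendable t w rL"
  shows "\<forall>x\<in>{0..w}. \<exists>rL'. linear_realization (L3 a b t (c + 4 * x + 4)) rL' \<and>
           (special2 rL \<longrightarrow> special2 rL')"
proof
  fix x assume x: "x \<in> {0..w}"
  obtain i where i: "i \<in> {1::int, 2}" and E: "\<forall>x\<in>{0..w}.
        is_edge rL (int (length rL) - int t + 4 * int x) (int (length rL) - int t + (3 - i) + 4 * int x) \<and>
        is_edge rL (int (length rL) - int t + 4 * int x + i) (int (length rL) - int t + (3 - i) + 4 * int x + i)"
    using assms(7) unfolding extendable_def Let_def by blast
  define d where "d = nat (3 - i)"
  define k where "k = nat i"
  have dk: "(d=2 \<and> k=1) \<or> (d=1 \<and> k=(2::nat))" using i unfolding d_def k_def by auto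
  have di: "int d = 3 - i" "int k = i" using i unfolding d_def k_def by auto
  have E': "\<forall>y\<le>x. is_edge rL (int (length rL) - int t + 4 * int y) (int (length rL) - int t + 4 * int y + int d) \<and>
       is_edge rL (int (length rL) - int t + 4 * int y + int k) (int (length rL) - int t + 4 * int y + int k + int d)"
  proof (intro allI impI)
    fix y assume "y \<le> x"
    then have "y \<in> {0..w}" using x by auto
    with E show "is_edge rL (int (length rL) - int t + 4 * int y) (int (length rL) - int t + 4 * int y + int d) \<and>
       is_edge rL (int (length rL) - int t + 4 * int y + int k) (int (length rL) - int t + 4 * int y + int k + int d)"
      unfolding di by (auto simp: algebra_simps)
  qed
  from main_ind[OF dk, of a b t x, THEN spec[of _ c], THEN spec[of _ rL]] assms(6) E' obtain rL' where
    "linear_realization (L3 a b t (c + 4 * x + 4)) rL'" "hd rL' = hd rL" "last rL' = last rL"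
    by blast
  then show "\<exists>rL'. linear_realization (L3 a b t (c + 4 * x + 4)) rL' \<and> (special2 rL \<longrightarrow> special2 rL')"
    unfolding special2_def by metis
qed

end
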